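(* Let $X\subseteq\mathbb{C}^n$ be a complex analytic set and $\mathcal M\subseteq\mathcal O_X^p$ a sheaf of $\mathcal O_X$-submodules. Then: (1) $\mathcal M_{S_1}$ is an $\mathcal O_X$-submodule of $\mathcal O_X^p$, i.e. for every $x\in X$, $(\mathcal M_{S_1})_x$ is an $\mathcal O_{X,x}$-submodule of $\mathcal O_{X,x}^p$; (2) for every $x\in X$, $\mathcal M_x\subseteq(\mathcal M_{S_1})_x\subseteq\overline{\mathcal M_x}$.
   Context: $X\subseteq\mathbb{C}^n$ is a complex analytic set with coordinates $z_1,\dots,z_n$, and $\pi_1,\pi_2:X\times X\to X$ are the two projections. For $h\in\mathcal O_X^p$ the double of $h$ is $h_D=(h\circ\pi_1,h\circ\pi_2)\in\mathcal O_{X\times X}^{2p}$. The double $\mathcal M_D$ of $\mathcal M\subseteq\mathcal O_X^p$ is the $\mathcal O_{X\times X}$-submodule of $\mathcal O_{X\times X}^{2p}$ generated by $\{h_D: h\in\mathcal M\}$. $\overline N$ denotes the integral closure of a submodule $N$ of a free module over the local ring of an analytic space; by the curve criterion, $h\in\overline N$ at a point iff $\phi^*h\in\phi^*N$ for every analytic curve germ $\phi:(\mathbb C,0)\to$ (space, point). The 1-Lipschitz saturation is $(\mathcal M_{S_1})_x=\{h\in\mathcal O_{X,x}^p: h_D\in\overline{\mathcal M_D}\text{ at }(x,x)\}$. *)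

theory Defs
  imports "HOL-Analysis.Analysis"
begin

definition cholo_on :: "(complex^'m) set \<Rightarrow> (complex^'m \<Rightarrow> complex) \<Rightarrow> bool" where
  "cholo_on U f \<longleftrightarrow> open U \<and>
     (\<forall>w\<in>U. \<exists>D. (f has_derivative D) (at w) \<and> (\<forall>c v. D (c *s v) = c * D v))"

definition sholo_germ :: "complex^'m \<Rightarrow> (complex^'m \<Rightarrow> complex) \<Rightarrow> bool" where
  "sholo_germ y a \<longleftrightarrow> (\<exists>U. open U \<and> y \<in> U \<and> cholo_on U a)"

definition holo_germ :: "complex^'m \<Rightarrow> (complex^'m \<Rightarrow> complex^'q) \<Rightarrow> bool" where
  "holo_germ y h \<longleftrightarrow> (\<exists>U. open U \<and> y \<in> U \<and> (\<forall>j. cholo_on U (\<lambda>z. h z $ j)))"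

definition analytic_set :: "(complex^'m) set \<Rightarrow> bool" where
  "analytic_set X \<longleftrightarrow> (\<forall>x\<in>X. \<exists>U F. open U \<and> x \<in> U \<and> finite F \<and>
       (\<forall>f\<in>F. cholo_on U f) \<and> X \<inter> U = {z\<in>U. \<forall>f\<in>F. f z = 0})"

text \<open>Elements of O_{Y,y}^q are represented by ambient holomorphic maps near y; two
  representatives define the same germ iff they agree on Y near y.\<close>
definition same_germ :: "(complex^'m) set \<Rightarrow> complex^'m \<Rightarrow> (complex^'m \<Rightarrow> 'b) \<Rightarrow> (complex^'m \<Rightarrow> 'b) \<Rightarrow> bool" where
  "same_germ Y y g h \<longleftrightarrow> (\<exists>V. open V \<and> y \<in> V \<and> (\<forall>z\<in>Y \<inter> V. g z = h z))"

definition germ_submodule :: "(complex^'m) set \<Rightarrow> complex^'m \<Rightarrow> (complex^'m \<Rightarrow> complex^'q) set \<Rightarrow> bool" where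
  "germ_submodule Y y N \<longleftrightarrow>
     (\<forall>h\<in>N. holo_germ y h) \<and>
     (\<lambda>z. 0) \<in> N \<and>
     (\<forall>g\<in>N. \<forall>h\<in>N. (\<lambda>z. g z + h z) \<in> N) \<and>
     (\<forall>a h. sholo_germ y a \<longrightarrow> h \<in> N \<longrightarrow> (\<lambda>z. a z *s h z) \<in> N) \<and>
     (\<forall>h\<in>N. \<forall>g. holo_germ y g \<longrightarrow> same_germ Y y g h \<longrightarrow> g \<in> N)"

definition span_germs :: "(complex^'m) set \<Rightarrow> complex^'m \<Rightarrow> (complex^'m \<Rightarrow> complex^'q) set
     \<Rightarrow> (complex^'m \<Rightarrow> complex^'q) set" where
  "span_germs Y y S = {h. holo_germ y h \<and>
     (\<exists>V (k::nat) g a. open V \<and> y \<in> V \<and> (\<forall>i<k. g i \<in> S \<and> sholo_germ y (a i)) \<and>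
        (\<forall>z\<in>Y \<inter> V. h z = (\<Sum>i<k. a i z *s g i z)))}"

definition curve_germ :: "(complex^'m) set \<Rightarrow> complex^'m \<Rightarrow> (complex \<Rightarrow> complex^'m) \<Rightarrow> bool" where
  "curve_germ Y y \<phi> \<longleftrightarrow> \<phi> 0 = y \<and>
     (\<exists>\<epsilon>>0. (\<forall>t\<in>ball 0 \<epsilon>. \<phi> t \<in> Y) \<and> (\<forall>i. (\<lambda>t. \<phi> t $ i) holomorphic_on ball 0 \<epsilon>))"

definition pullback_module :: "(complex \<Rightarrow> complex^'m) \<Rightarrow> (complex^'m \<Rightarrow> complex^'q) set
     \<Rightarrow> (complex \<Rightarrow> complex^'q) set" where
  "pullback_module \<phi> N = {u. \<exists>\<epsilon>>0. \<exists>(k::nat) g a.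
     (\<forall>i<k. g i \<in> N \<and> a i holomorphic_on ball 0 \<epsilon>) \<and>
     (\<forall>t\<in>ball 0 \<epsilon>. u t = (\<Sum>i<k. a i t *s g i (\<phi> t)))}"

text \<open>Integral closure of a submodule N of O_{Y,y}^q (curve criterion):
  h in overline N iff phi^* h in phi^* N for every analytic curve germ phi: (C,0) -> (Y,y).\<close>
definition int_closure :: "(complex^'m) set \<Rightarrow> complex^'m \<Rightarrow> (complex^'m \<Rightarrow> complex^'q) set
     \<Rightarrow> (complex^'m \<Rightarrow> complex^'q) set" where
  "int_closure Y y N = {h. holo_germ y h \<and>
     (\<forall>\<phi>. curve_germ Y y \<phi> \<longrightarrow> (h \<circ> \<phi>) \<in> pullback_module \<phi> N)}"

text \<open>C^n x C^n is identified with C^('n + 'n).\<close>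
definition dpt :: "complex^'n \<Rightarrow> complex^'n \<Rightarrow> complex^('n + 'n)" where
  "dpt x y = (\<chi> k. case k of Inl j \<Rightarrow> x $ j | Inr j \<Rightarrow> y $ j)"

definition pr1 :: "complex^('n + 'n) \<Rightarrow> complex^'n" where
  "pr1 w = (\<chi> j. w $ Inl j)"

definition pr2 :: "complex^('n + 'n) \<Rightarrow> complex^'n" where
  "pr2 w = (\<chi> j. w $ Inr j)"

definition XxX :: "(complex^'n) set \<Rightarrow> (complex^('n + 'n)) set" where
  "XxX X = {w. pr1 w \<in> X \<and> pr2 w \<in> X}"

definition dbl :: "(complex^'n \<Rightarrow> complex^'p) \<Rightarrow> complex^('n + 'n) \<Rightarrow> complex^('p + 'p)" where
  "dbl h w = (\<chi> k. case k of Inl j \<Rightarrow> h (pr1 w) $ j | Inr j \<Rightarrow> h (pr2 w) $ j)"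

definition double_stalk :: "(complex^'n) set \<Rightarrow> (complex^'n \<Rightarrow> (complex^'n \<Rightarrow> complex^'p) set)
     \<Rightarrow> complex^'n \<Rightarrow> (complex^('n + 'n) \<Rightarrow> complex^('p + 'p)) set" where
  "double_stalk X M x = span_germs (XxX X) (dpt x x) {dbl h | h. h \<in> M x}"

definition lip_sat :: "(complex^'n) set \<Rightarrow> (complex^'n \<Rightarrow> (complex^'n \<Rightarrow> complex^'p) set)
     \<Rightarrow> complex^'n \<Rightarrow> (complex^'n \<Rightarrow> complex^'p) set" where
  "lip_sat X M x = {h. holo_germ x h \<and>
     dbl h \<in> int_closure (XxX X) (dpt x x) (double_stalk X M x)}"

text \<open>M x is the stalk at x (a set of representatives of germs).  M is a subsheaf of
  O_X-submodules of O_X^p: every stalk is a submodule, and every germ in a stalk comes from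
  a section on a neighbourhood, i.e. its germs at nearby points of X lie in M.\<close>
definition sheaf_submodule :: "(complex^'n) set \<Rightarrow> (complex^'n \<Rightarrow> (complex^'n \<Rightarrow> complex^'p) set) \<Rightarrow> bool" where
  "sheaf_submodule X M \<longleftrightarrow>
     (\<forall>x\<in>X. germ_submodule X x (M x)) \<and>
     (\<forall>x\<in>X. \<forall>h\<in>M x. \<exists>U. open U \<and> x \<in> U \<and> (\<forall>y\<in>X \<inter> U. h \<in> M y))"

end

theory Submission
  imports Defs
begin

lemma vec_has_derivative:
  fixes f :: "'a::euclidean_space \<Rightarrow> complex^'k"
  assumes "\<And>i. ((\<lambda>t. f t $ i) has_derivative f' i) (at x)"
  shows "(f has_derivative (\<lambda>h. \<chi> i. f' i h)) (at x)"
proof -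
  have bl: "\<And>i. bounded_linear (f' i)" using assms has_derivative_bounded_linear by blast
  have "linear (\<lambda>h. \<chi> i. f' i h)"
    by (rule linearI) (simp_all add: vec_eq_iff linear_add linear_scale bounded_linear.linear[OF bl])
  hence BL: "bounded_linear (\<lambda>h. \<chi> i. f' i h)" by (simp add: linear_conv_bounded_linear)
  have "((\<lambda>y. (1 / norm(y - x)) *\<^sub>R (f y - (f x + (\<chi> i. f' i (y - x))))) \<longlongrightarrow> 0) (at x)"
  proof (rule vec_tendstoI)
    fix i
    have "((\<lambda>y. (1 / norm(y - x)) *\<^sub>R (f y $ i - (f x $ i + f' i (y - x)))) \<longlongrightarrow> 0) (at x)"
      using assms[of i] unfolding has_derivative_within by blast
    thus "((\<lambda>y. ((1 / norm(y - x)) *\<^sub>R (f y - (f x + (\<chi> i. f' i (y - x))))) $ i) \<longlongrightarrow> 0 $ i) (at x)"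
      by simp
  qed
  thus ?thesis using BL unfolding has_derivative_within by blast
qed

lemma cholo_on_subset: "cholo_on U f \<Longrightarrow> open V \<Longrightarrow> V \<subseteq> U \<Longrightarrow> cholo_on V f"
  unfolding cholo_on_def by blast

lemma cholo_on_const: "open U \<Longrightarrow> cholo_on U (\<lambda>z. c)"
  unfolding cholo_on_def by (auto intro!: exI[of _ "\<lambda>_. 0"])

lemma cholo_on_add: "cholo_on U f \<Longrightarrow> cholo_on U g \<Longrightarrow> cholo_on U (\<lambda>z. f z + g z)"
  unfolding cholo_on_def
proof (intro conjI ballI)
  fix w assume A: "open U \<and> (\<forall>w\<in>U. \<exists>D. (f has_derivative D) (at w) \<and> (\<forall>c v. D (c *s v) = c * D v))"
    "open U \<and> (\<forall>w\<in>U. \<exists>D. (g has_derivative D) (at w) \<and> (\<forall>c v. D (c *s v) = c * D v))"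
    and w: "w \<in> U"
  then obtain D E where "(f has_derivative D) (at w)" "\<forall>c v. D (c *s v) = c * D v"
    "(g has_derivative E) (at w)" "\<forall>c v. E (c *s v) = c * E v" by blast
  thus "\<exists>D. ((\<lambda>z. f z + g z) has_derivative D) (at w) \<and> (\<forall>c v. D (c *s v) = c * D v)"
    by (intro exI[of _ "\<lambda>v. D v + E v"]) (auto intro: has_derivative_add simp: distrib_left)
qed auto

lemma cholo_on_mult: "cholo_on U f \<Longrightarrow> cholo_on U g \<Longrightarrow> cholo_on U (\<lambda>z. f z * g z)"
  unfolding cholo_on_def
proof (intro conjI ballI)
  fix w assume A: "open U \<and> (\<forall>w\<in>U. \<exists>D. (f has_derivative D) (at w) \<and> (\<forall>c v. D (c *s v) = c * D v))"
    "open U \<and> (\<forall>w\<in>U. \<exists>D. (g has_derivative D) (at w) \<and> (\<forall>c v. D (c *s v) = c * D v))"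
    and w: "w \<in> U"
  then obtain D E where "(f has_derivative D) (at w)" "\<forall>c v. D (c *s v) = c * D v"
    "(g has_derivative E) (at w)" "\<forall>c v. E (c *s v) = c * E v" by blast
  thus "\<exists>D. ((\<lambda>z. f z * g z) has_derivative D) (at w) \<and> (\<forall>c v. D (c *s v) = c * D v)"
  proof (intro exI conjI allI)
    show "((\<lambda>z. f z * g z) has_derivative (\<lambda>v. f w * E v + D v * g w)) (at w)"
      by (rule has_derivative_mult) fact+
    fix c v show "f w * E (c *s v) + D (c *s v) * g w = c * (f w * E v + D v * g w)"
      using \<open>\<forall>c v. D (c *s v) = c * D v\<close> \<open>\<forall>c v. E (c *s v) = c * E v\<close> by (simp add: algebra_simps)
  qed
qed auto

lemma cholo_on_comp_linear:
  fixes L :: "complex^'a \<Rightarrow> complex^'b"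
  assumes L: "linear L" "\<And>c v. L (c *s v) = c *s L v" and f: "cholo_on U f"
  shows "cholo_on (L -` U) (\<lambda>z. f (L z))"
  unfolding cholo_on_def
proof (intro conjI ballI)
  have bl: "bounded_linear L" using L by (simp add: linear_conv_bounded_linear)
  show "open (L -` U)" using f unfolding cholo_on_def
    by (intro open_vimage) (auto intro: linear_continuous_on bl)
  fix w assume "w \<in> L -` U"
  then obtain D where D: "(f has_derivative D) (at (L w))" "\<forall>c v. D (c *s v) = c * D v"
    using f unfolding cholo_on_def by auto
  have "((\<lambda>z. f (L z)) has_derivative (\<lambda>v. D (L v))) (at w)"
    using has_derivative_compose[OF bounded_linear_imp_has_derivative[OF bl] D(1)] by (simp add: o_def)
  thus "\<exists>D. ((\<lambda>z. f (L z)) has_derivative D) (at w) \<and> (\<forall>c v. D (c *s v) = c * D v)"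
    using D(2) L(2) by auto
qed

lemma pr1_dpt[simp]: "pr1 (dpt x y) = x" and pr2_dpt[simp]: "pr2 (dpt x y) = y"
  by (simp_all add: pr1_def pr2_def dpt_def vec_eq_iff)

lemma dbl_Inl[simp]: "dbl h w $ Inl j = h (pr1 w) $ j" and dbl_Inr[simp]: "dbl h w $ Inr j = h (pr2 w) $ j"
  by (simp_all add: dbl_def)

lemma linear_pr1: "linear pr1" and linear_pr2: "linear pr2"
  by (auto intro!: linearI simp: pr1_def pr2_def vec_eq_iff)

lemma pr1_smult: "pr1 (c *s v) = c *s pr1 v" and pr2_smult: "pr2 (c *s v) = c *s pr2 v"
  by (simp_all add: pr1_def pr2_def vec_eq_iff)

lemma holo_germ_dbl:
  assumes "holo_germ x h" shows "holo_germ (dpt x x) (dbl h)"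
proof -
  obtain U where U: "open U" "x \<in> U" "\<And>j. cholo_on U (\<lambda>z. h z $ j)"
    using assms unfolding holo_germ_def by blast
  define U' where "U' = pr1 -` U \<inter> pr2 -` U"
  have c1: "\<And>j. cholo_on (pr1 -` U) (\<lambda>w. h (pr1 w) $ j)"
    using cholo_on_comp_linear[OF linear_pr1 pr1_smult U(3)] by blast
  have c2: "\<And>j. cholo_on (pr2 -` U) (\<lambda>w. h (pr2 w) $ j)"
    using cholo_on_comp_linear[OF linear_pr2 pr2_smult U(3)] by blast
  have oU': "open U'" using c1 c2 unfolding U'_def cholo_on_def by blast
  have "cholo_on U' (\<lambda>w. dbl h w $ k)" for k
  proof (cases k)
    case (Inl j) thus ?thesis using cholo_on_subset[OF c1 oU'] U'_def by auto
  next
    case (Inr j) thus ?thesis using cholo_on_subset[OF c2 oU'] U'_def by auto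
  qed
  moreover have "dpt x x \<in> U'" using U unfolding U'_def by simp
  ultimately show ?thesis unfolding holo_germ_def using oU' by blast
qed

lemma holo_germ_zero: "holo_germ x (\<lambda>z. 0)"
  unfolding holo_germ_def using cholo_on_const[of UNIV] by (auto intro!: exI[of _ UNIV])

lemma sholo_germ_const: "sholo_germ x (\<lambda>z. c)"
  unfolding sholo_germ_def using cholo_on_const[of UNIV] by (auto intro!: exI[of _ UNIV])

lemma holo_germ_add: assumes "holo_germ x g" "holo_germ x h" shows "holo_germ x (\<lambda>z. g z + h z)"
proof -
  obtain U where U: "open U" "x \<in> U" "\<And>j. cholo_on U (\<lambda>z. g z $ j)"
    using assms unfolding holo_germ_def by blast
  obtain V where V: "open V" "x \<in> V" "\<And>j. cholo_on V (\<lambda>z. h z $ j)"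
    using assms unfolding holo_germ_def by blast
  have "cholo_on (U \<inter> V) (\<lambda>z. (g z + h z) $ j)" for j
    using cholo_on_add[OF cholo_on_subset[OF U(3), of "U \<inter> V" j] cholo_on_subset[OF V(3), of "U \<inter> V" j]] U V by auto
  thus ?thesis unfolding holo_germ_def using U V by (intro exI[of _ "U \<inter> V"]) auto
qed

lemma holo_germ_smult: assumes "sholo_germ x a" "holo_germ x h" shows "holo_germ x (\<lambda>z. a z *s h z)"
proof -
  obtain U where U: "open U" "x \<in> U" "cholo_on U a"
    using assms unfolding sholo_germ_def by blast
  obtain V where V: "open V" "x \<in> V" "\<And>j. cholo_on V (\<lambda>z. h z $ j)"
    using assms unfolding holo_germ_def by blast
  have "cholo_on (U \<inter> V) (\<lambda>z. (a z *s h z) $ j)" for j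
    using cholo_on_mult[OF cholo_on_subset[OF U(3), of "U \<inter> V"] cholo_on_subset[OF V(3), of "U \<inter> V" j]] U V by auto
  thus ?thesis unfolding holo_germ_def using U V by (intro exI[of _ "U \<inter> V"]) auto
qed

lemma curve_near:
  assumes "curve_germ Y y \<phi>" "open V" "y \<in> V"
  shows "\<exists>\<delta>>0. (\<forall>t\<in>ball 0 \<delta>. \<phi> t \<in> Y \<and> \<phi> t \<in> V) \<and> (\<forall>i. (\<lambda>t. \<phi> t $ i) holomorphic_on ball 0 \<delta>)"
proof -
  obtain \<epsilon> where e: "\<epsilon> > 0" "\<forall>t\<in>ball 0 \<epsilon>. \<phi> t \<in> Y" "\<forall>i. (\<lambda>t. \<phi> t $ i) holomorphic_on ball 0 \<epsilon>"
    and p0: "\<phi> 0 = y" using assms(1) unfolding curve_germ_def by blast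
  have "continuous_on (ball 0 \<epsilon>) (\<lambda>t. \<chi> i. \<phi> t $ i)"
    using e(3) by (intro continuous_on_vec_lambda holomorphic_on_imp_continuous_on) auto
  hence "continuous_on (ball 0 \<epsilon>) \<phi>" by simp
  hence "isCont \<phi> 0" using e(1) by (simp add: continuous_on_eq_continuous_at)
  hence "eventually (\<lambda>t. \<phi> t \<in> V) (at 0)"
    using assms(2,3) p0 unfolding isCont_def by (metis topological_tendstoD)
  then obtain d where d: "d > 0" "\<forall>t. t \<noteq> 0 \<and> dist t 0 < d \<longrightarrow> \<phi> t \<in> V"
    unfolding eventually_at by blast
  show ?thesis
  proof (intro exI[of _ "min d \<epsilon>"] conjI ballI allI)
    show "min d \<epsilon> > 0" using d e by simp
    fix t :: complex assume t: "t \<in> ball 0 (min d \<epsilon>)"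
    show "\<phi> t \<in> Y" using t e by auto
    show "\<phi> t \<in> V" using t d p0 assms(3) by (cases "t = 0") (auto simp: dist_commute)
  next
    fix i show "(\<lambda>t. \<phi> t $ i) holomorphic_on ball 0 (min d \<epsilon>)"
      using e(3) holomorphic_on_subset[of "\<lambda>t. \<phi> t $ i" "ball 0 \<epsilon>" "ball 0 (min d \<epsilon>)"] by (simp add: subset_ball)
  qed
qed

lemma curve_comp:
  assumes "sholo_germ y b" "curve_germ Y y \<phi>"
  shows "\<exists>\<delta>>0. (\<lambda>t. b (\<phi> t)) holomorphic_on ball 0 \<delta>"
proof -
  obtain U where U: "open U" "y \<in> U" "cholo_on U b" using assms(1) unfolding sholo_germ_def by blast
  obtain \<delta> where d: "\<delta> > 0" "\<forall>t\<in>ball 0 \<delta>. \<phi> t \<in> U" "\<forall>i. (\<lambda>t. \<phi> t $ i) holomorphic_on ball 0 \<delta>"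
    using curve_near[OF assms(2) U(1,2)] by blast
  have "(\<lambda>t. b (\<phi> t)) holomorphic_on ball 0 \<delta>"
    unfolding holomorphic_on_open[OF open_ball]
  proof
    fix t :: complex assume t: "t \<in> ball 0 \<delta>"
    have "\<forall>i. \<exists>f'. ((\<lambda>t. \<phi> t $ i) has_field_derivative f') (at t)"
      using d(3) t unfolding holomorphic_on_open[OF open_ball] by blast
    then obtain v where v: "\<And>i. ((\<lambda>t. \<phi> t $ i) has_field_derivative v i) (at t)" by metis
    have "(\<phi> has_derivative (\<lambda>h. \<chi> i. v i * h)) (at t)"
      by (rule vec_has_derivative) (use v in \<open>simp add: has_field_derivative_def\<close>)
    moreover obtain D where D: "(b has_derivative D) (at (\<phi> t))" "\<forall>c w. D (c *s w) = c * D w"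
      using U(3) d(2) t unfolding cholo_on_def by blast
    ultimately have "((\<lambda>t. b (\<phi> t)) has_derivative (\<lambda>h. D (\<chi> i. v i * h))) (at t)"
      using has_derivative_compose[of \<phi> _ t UNIV b D] by (simp add: o_def)
    moreover have "(\<lambda>h. D (\<chi> i. v i * h)) = (*) (D (\<chi> i. v i))"
    proof
      fix h have "(\<chi> i. v i * h) = h *s (\<chi> i. v i)" by (simp add: vec_eq_iff mult.commute)
      thus "D (\<chi> i. v i * h) = D (\<chi> i. v i) * h" using D(2) by (simp add: mult.commute)
    qed
    ultimately show "\<exists>f'. ((\<lambda>t. b (\<phi> t)) has_field_derivative f') (at t)"
      unfolding has_field_derivative_def by metis
  qed
  thus ?thesis using d(1) by blast
qed

lemma sum_split_nat: "(\<Sum>i<k+(k'::nat). f i) = (\<Sum>i<k. f i) + (\<Sum>i<k'. f (k+i)::'a::comm_monoid_add)"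
  by (induction k') (simp_all add: ac_simps)

lemma pb_cong:
  assumes "u \<in> pullback_module \<phi> N" "\<epsilon> > 0" "\<forall>t\<in>ball 0 \<epsilon>. v t = u t"
  shows "v \<in> pullback_module \<phi> N"
proof -
  obtain e and k::nat and g a where u: "e > 0" "\<forall>i<k. g i \<in> N \<and> a i holomorphic_on ball 0 e"
    "\<forall>t\<in>ball 0 e. u t = (\<Sum>i<k. a i t *s g i (\<phi> t))"
    using assms(1) unfolding pullback_module_def by blast
  have "\<forall>i<k. g i \<in> N \<and> a i holomorphic_on ball 0 (min e \<epsilon>)"
    using u(2) holomorphic_on_subset subset_ball[of "min e \<epsilon>" e] by (metis min.cobounded1)
  moreover have "\<forall>t\<in>ball 0 (min e \<epsilon>). v t = (\<Sum>i<k. a i t *s g i (\<phi> t))"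
    using u(3) assms(3) by auto
  ultimately show ?thesis unfolding pullback_module_def using u(1) assms(2)
    by (intro CollectI exI[of _ "min e \<epsilon>"] conjI) (simp, blast)
qed

lemma pb_zero: "(\<lambda>t. 0) \<in> pullback_module \<phi> N"
  unfolding pullback_module_def by (intro CollectI exI[of _ 1] conjI exI[of _ 0]) auto

lemma pb_single: "g \<in> N \<Longrightarrow> (\<lambda>t. g (\<phi> t)) \<in> pullback_module \<phi> N"
  unfolding pullback_module_def
  by (intro CollectI exI[of _ 1] conjI exI[of _ "Suc 0"] exI[of _ "\<lambda>_. g"] exI[of _ "\<lambda>_ _. 1"]) auto

lemma pb_mult:
  assumes "u \<in> pullback_module \<phi> N" "\<epsilon> > 0" "c holomorphic_on ball 0 \<epsilon>"
  shows "(\<lambda>t. c t *s u t) \<in> pullback_module \<phi> N"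
proof -
  obtain e and k::nat and g a where u: "e > 0" "\<forall>i<k. g i \<in> N \<and> a i holomorphic_on ball 0 e"
    "\<forall>t\<in>ball 0 e. u t = (\<Sum>i<k. a i t *s g i (\<phi> t))"
    using assms(1) unfolding pullback_module_def by blast
  define m where "m = min e \<epsilon>"
  have m: "m > 0" "ball 0 m \<subseteq> ball 0 e" "ball 0 m \<subseteq> ball 0 \<epsilon>" using u(1) assms(2) by (auto simp: m_def)
  have "\<forall>i<k. g i \<in> N \<and> (\<lambda>t. c t * a i t) holomorphic_on ball 0 m"
    using u(2) assms(3) m by (auto intro!: holomorphic_on_mult intro: holomorphic_on_subset)
  moreover have "\<forall>t\<in>ball 0 m. c t *s u t = (\<Sum>i<k. (c t * a i t) *s g i (\<phi> t))"
    using u(3) m by (auto simp: vec_eq_iff sum_distrib_left mult.assoc)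
  ultimately show ?thesis unfolding pullback_module_def using m(1)
    by (intro CollectI exI[of _ m] conjI exI[of _ k] exI[of _ g] exI[of _ "\<lambda>i t. c t * a i t"]) auto
qed

lemma pb_add:
  assumes "u \<in> pullback_module \<phi> N" "v \<in> pullback_module \<phi> N"
  shows "(\<lambda>t. u t + v t) \<in> pullback_module \<phi> N"
proof -
  obtain e and k::nat and g a where u: "e > 0" "\<forall>i<k. g i \<in> N \<and> a i holomorphic_on ball 0 e"
    "\<forall>t\<in>ball 0 e. u t = (\<Sum>i<k. a i t *s g i (\<phi> t))"
    using assms(1) unfolding pullback_module_def by blast
  obtain e' and k'::nat and g' a' where v: "e' > 0" "\<forall>i<k'. g' i \<in> N \<and> a' i holomorphic_on ball 0 e'"
    "\<forall>t\<in>ball 0 e'. v t = (\<Sum>i<k'. a' i t *s g' i (\<phi> t))"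
    using assms(2) unfolding pullback_module_def by blast
  define m where "m = min e e'"
  have m: "m > 0" "ball 0 m \<subseteq> ball 0 e" "ball 0 m \<subseteq> ball 0 e'" using u(1) v(1) by (auto simp: m_def)
  define G where "G i = (if i < k then g i else g' (i - k))" for i
  define A where "A i = (if i < k then a i else a' (i - k))" for i
  have "\<forall>i<k+k'. G i \<in> N \<and> A i holomorphic_on ball 0 m"
  proof (intro allI impI)
    fix i assume i: "i < k + k'"
    show "G i \<in> N \<and> A i holomorphic_on ball 0 m"
    proof (cases "i < k")
      case True thus ?thesis using u(2) m unfolding G_def A_def by (auto intro: holomorphic_on_subset)
    next
      case False hence "i - k < k'" using i by simp
      thus ?thesis using False v(2) m unfolding G_def A_def by (auto intro: holomorphic_on_subset)
    qed
  qed
  moreover have "\<forall>t\<in>ball 0 m. u t + v t = (\<Sum>i<k+k'. A i t *s G i (\<phi> t))"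
  proof
    fix t :: complex assume t: "t \<in> ball 0 m"
    have "(\<Sum>i<k+k'. A i t *s G i (\<phi> t)) = (\<Sum>i<k. A i t *s G i (\<phi> t)) + (\<Sum>i<k'. A (k+i) t *s G (k+i) (\<phi> t))"
      by (rule sum_split_nat)
    also have "\<dots> = u t + v t"
    proof -
      have "t \<in> ball 0 e" "t \<in> ball 0 e'" using t m(2,3) by blast+
      thus ?thesis using u(3) v(3) unfolding A_def G_def by simp
    qed
    finally show "u t + v t = (\<Sum>i<k+k'. A i t *s G i (\<phi> t))" by simp
  qed
  ultimately show ?thesis unfolding pullback_module_def using m(1)
    by (intro CollectI exI[of _ m] conjI exI[of _ "k+k'"] exI[of _ G] exI[of _ A]) auto
qed

lemma pb_sum:
  "(\<And>i. i < (k::nat) \<Longrightarrow> f i \<in> pullback_module \<phi> N) \<Longrightarrow> (\<lambda>t. \<Sum>i<k. f i t) \<in> pullback_module \<phi> N"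
proof (induction k)
  case 0 thus ?case using pb_zero by simp
next
  case (Suc k)
  have "(\<lambda>t. (\<Sum>i<k. f i t) + f k t) \<in> pullback_module \<phi> N"
    using Suc by (intro pb_add) auto
  thus ?case by simp
qed

lemma pb_trans:
  assumes "\<epsilon> > 0" "\<forall>i<(k::nat). a i holomorphic_on ball 0 \<epsilon>"
    "\<forall>i<k. (\<lambda>t. g i (\<phi> t)) \<in> pullback_module \<phi> N"
    "\<forall>t\<in>ball 0 \<epsilon>. u t = (\<Sum>i<k. a i t *s g i (\<phi> t))"
  shows "u \<in> pullback_module \<phi> N"
proof -
  have "(\<lambda>t. \<Sum>i<k. a i t *s g i (\<phi> t)) \<in> pullback_module \<phi> N"
  proof (rule pb_sum)
    fix i assume i: "i < k"
    show "(\<lambda>t. a i t *s g i (\<phi> t)) \<in> pullback_module \<phi> N"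
      using assms(1) assms(2,3)[rule_format, OF i] by (rule pb_mult[rotated])
  qed
  thus ?thesis using assms(1,4) by (rule pb_cong)
qed

lemma open_pr_vimage: "open V \<Longrightarrow> open (pr1 -` V \<inter> pr2 -` V)"
proof -
  assume V: "open V"
  have "bounded_linear pr1" "bounded_linear pr2" using linear_pr1 linear_pr2 by (simp_all add: linear_conv_bounded_linear)
  thus ?thesis using V by (intro open_Int open_vimage) (auto intro: linear_continuous_on)
qed

lemma ds_curve:
  assumes G: "G \<in> double_stalk X M x" and c: "curve_germ (XxX X) (dpt x x) \<phi>"
  shows "(\<lambda>t. G (\<phi> t)) \<in> pullback_module \<phi> {dbl h | h. h \<in> M x}"
proof -
  obtain V and k::nat and g a where V: "open V" "dpt x x \<in> V"
    "\<forall>i<k. g i \<in> {dbl h | h. h \<in> M x} \<and> sholo_germ (dpt x x) (a i)"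
    "\<forall>z\<in>XxX X \<inter> V. G z = (\<Sum>i<k. a i z *s g i z)"
    using G unfolding double_stalk_def span_germs_def by blast
  obtain d where d: "d > 0" "\<forall>t\<in>ball 0 d. \<phi> t \<in> XxX X \<and> \<phi> t \<in> V"
    using curve_near[OF c V(1,2)] by blast
  have "\<forall>i. \<exists>e. i < k \<longrightarrow> e > 0 \<and> (\<lambda>t. a i (\<phi> t)) holomorphic_on ball 0 e"
    using curve_comp[OF _ c] V(3) by blast
  then obtain e where e: "\<And>i. i < k \<Longrightarrow> e i > 0 \<and> (\<lambda>t. a i (\<phi> t)) holomorphic_on ball 0 (e i)"
    by metis
  define \<epsilon> where "\<epsilon> = Min (insert d (e ` {..<k}))"
  have fin: "finite (insert d (e ` {..<k}))" by simp
  have "\<epsilon> > 0" unfolding \<epsilon>_def using d(1) e by (subst Min_gr_iff[OF fin]) auto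
  have le: "\<epsilon> \<le> d" "\<And>i. i < k \<Longrightarrow> \<epsilon> \<le> e i" unfolding \<epsilon>_def using fin by auto
  show ?thesis
  proof (rule pb_trans[of \<epsilon> k "\<lambda>i t. a i (\<phi> t)" g])
    show "\<epsilon> > 0" by fact
    show "\<forall>i<k. (\<lambda>t. a i (\<phi> t)) holomorphic_on ball 0 \<epsilon>"
      using e le(2) by (meson holomorphic_on_subset subset_ball)
    show "\<forall>i<k. (\<lambda>t. g i (\<phi> t)) \<in> pullback_module \<phi> {dbl h | h. h \<in> M x}"
      using V(3) pb_single by blast
    show "\<forall>t\<in>ball 0 \<epsilon>. G (\<phi> t) = (\<Sum>i<k. a i (\<phi> t) *s g i (\<phi> t))"
      using d(2) V(4) le(1) by auto
  qed
qed

lemma pb_double: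
  assumes "u \<in> pullback_module \<phi> (double_stalk X M x)" "curve_germ (XxX X) (dpt x x) \<phi>"
  shows "u \<in> pullback_module \<phi> {dbl h | h. h \<in> M x}"
proof -
  obtain e and k::nat and g a where u: "e > 0" "\<forall>i<k. g i \<in> double_stalk X M x \<and> a i holomorphic_on ball 0 e"
    "\<forall>t\<in>ball 0 e. u t = (\<Sum>i<k. a i t *s g i (\<phi> t))"
    using assms(1) unfolding pullback_module_def by blast
  show ?thesis using u ds_curve[OF _ assms(2)] by (intro pb_trans[of e k a g]) auto
qed

lemma pb_dbl_rep:
  assumes "u \<in> pullback_module \<phi> {dbl h | h. h \<in> M x}"
  shows "\<exists>e>0. \<exists>(k::nat) m a. (\<forall>i<k. m i \<in> M x \<and> a i holomorphic_on ball 0 e) \<and>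
     (\<forall>t\<in>ball 0 e. u t = (\<Sum>i<k. a i t *s dbl (m i) (\<phi> t)))"
proof -
  obtain e and k::nat and g a where u: "e > 0" "\<forall>i<k. g i \<in> {dbl h | h. h \<in> M x} \<and> a i holomorphic_on ball 0 e"
    "\<forall>t\<in>ball 0 e. u t = (\<Sum>i<k. a i t *s g i (\<phi> t))"
    using assms(1) unfolding pullback_module_def by blast
  have "\<forall>i. \<exists>m. i < k \<longrightarrow> g i = dbl m \<and> m \<in> M x" using u(2) by blast
  then obtain m where m: "\<And>i. i < k \<Longrightarrow> g i = dbl (m i) \<and> m i \<in> M x" by metis
  show ?thesis using u m by (intro exI[of _ e] conjI exI[of _ k] exI[of _ m] exI[of _ a]) auto
qed

lemma dbl_in_ds:
  assumes "germ_submodule X x (M x)" "h \<in> M x"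
  shows "dbl h \<in> double_stalk X M x"
proof -
  have "holo_germ x h" using assms unfolding germ_submodule_def by blast
  hence "holo_germ (dpt x x) (dbl h)" by (rule holo_germ_dbl)
  thus ?thesis unfolding double_stalk_def span_germs_def using assms(2) sholo_germ_const[of _ 1]
    by (intro CollectI conjI exI[of _ UNIV] exI[of _ "Suc 0"] exI[of _ "\<lambda>_. dbl h"] exI[of _ "\<lambda>_ _. 1"]) auto
qed

lemma diag_curve:
  assumes "curve_germ X x \<psi>"
  shows "curve_germ (XxX X) (dpt x x) (\<lambda>t. dpt (\<psi> t) (\<psi> t))"
proof -
  obtain \<epsilon> where e: "\<epsilon> > 0" "\<forall>t\<in>ball 0 \<epsilon>. \<psi> t \<in> X" "\<forall>i. (\<lambda>t. \<psi> t $ i) holomorphic_on ball 0 \<epsilon>"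
    and p0: "\<psi> 0 = x" using assms unfolding curve_germ_def by blast
  have "(\<lambda>t. dpt (\<psi> t) (\<psi> t) $ k) holomorphic_on ball 0 \<epsilon>" for k
    using e(3) by (cases k) (simp_all add: dpt_def)
  thus ?thesis unfolding curve_germ_def XxX_def using e p0 by auto
qed

theorem mainTheorem1:
  fixes X :: "(complex^'n) set"
    and M :: "complex^'n \<Rightarrow> (complex^'n \<Rightarrow> complex^'p) set"
  assumes "analytic_set X"
    and "sheaf_submodule X M"
  shows "\<forall>x\<in>X. germ_submodule X x (lip_sat X M x)
              \<and> M x \<subseteq> lip_sat X M x
              \<and> lip_sat X M x \<subseteq> int_closure X x (M x)"
proof
  fix x assume xX: "x \<in> X"
  have GS: "germ_submodule X x (M x)" using assms(2) xX unfolding sheaf_submodule_def by blast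
  have sub1: "M x \<subseteq> lip_sat X M x"
  proof
    fix h assume h: "h \<in> M x"
    have hg: "holo_germ x h" using GS h unfolding germ_submodule_def by blast
    have "dbl h \<in> double_stalk X M x" by (rule dbl_in_ds[of X x M, OF GS h])
    hence "\<forall>\<phi>. curve_germ (XxX X) (dpt x x) \<phi> \<longrightarrow> (dbl h \<circ> \<phi>) \<in> pullback_module \<phi> (double_stalk X M x)"
      using pb_single by (auto simp: o_def)
    thus "h \<in> lip_sat X M x" unfolding lip_sat_def int_closure_def using hg holo_germ_dbl[OF hg] by blast
  qed
  have sub2: "lip_sat X M x \<subseteq> int_closure X x (M x)"
  proof
    fix h assume h: "h \<in> lip_sat X M x"
    have hg: "holo_germ x h" using h unfolding lip_sat_def by blast
    have "(h \<circ> \<psi>) \<in> pullback_module \<psi> (M x)" if \<psi>: "curve_germ X x \<psi>" for \<psi>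
    proof -
      define \<phi> where "\<phi> = (\<lambda>t. dpt (\<psi> t) (\<psi> t))"
      have c: "curve_germ (XxX X) (dpt x x) \<phi>" unfolding \<phi>_def by (rule diag_curve[OF \<psi>])
      have "(dbl h \<circ> \<phi>) \<in> pullback_module \<phi> (double_stalk X M x)"
        using h c unfolding lip_sat_def int_closure_def by blast
      hence "(dbl h \<circ> \<phi>) \<in> pullback_module \<phi> {dbl h | h. h \<in> M x}" using pb_double[of _ _ X M x] c by blast
      then obtain e and k::nat and m a where r: "e > 0" "\<forall>i<k. m i \<in> M x \<and> a i holomorphic_on ball 0 e"
        "\<forall>t\<in>ball 0 e. (dbl h \<circ> \<phi>) t = (\<Sum>i<k. a i t *s dbl (m i) (\<phi> t))"
        using pb_dbl_rep[of _ _ M x] by blast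
      have "\<forall>t\<in>ball 0 e. (h \<circ> \<psi>) t = (\<Sum>i<k. a i t *s m i (\<psi> t))"
      proof
        fix t :: complex assume t: "t \<in> ball 0 e"
        have "\<forall>j. (dbl h \<circ> \<phi>) t $ Inl j = (\<Sum>i<k. a i t *s dbl (m i) (\<phi> t)) $ Inl j"
          using r(3) t by simp
        thus "(h \<circ> \<psi>) t = (\<Sum>i<k. a i t *s m i (\<psi> t))"
          by (simp add: vec_eq_iff \<phi>_def)
      qed
      thus ?thesis unfolding pullback_module_def using r(1,2)
        by (intro CollectI exI[of _ e] conjI exI[of _ k] exI[of _ m] exI[of _ a]) auto
    qed
    thus "h \<in> int_closure X x (M x)" unfolding int_closure_def using hg by blast
  qed
  have GL: "germ_submodule X x (lip_sat X M x)"
    unfolding germ_submodule_def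
  proof (intro conjI ballI allI impI)
    show "\<And>h. h \<in> lip_sat X M x \<Longrightarrow> holo_germ x h" unfolding lip_sat_def by blast
  next
    have Z: "dbl (\<lambda>z. 0::complex^'p) = (\<lambda>w. 0)" by (simp add: fun_eq_iff vec_eq_iff dbl_def split: sum.split)
    have "(dbl (\<lambda>z. 0::complex^'p) \<circ> \<phi>) \<in> pullback_module \<phi> (double_stalk X M x)" for \<phi>
      unfolding Z o_def by (rule pb_zero)
    thus "(\<lambda>z. 0) \<in> lip_sat X M x" unfolding lip_sat_def int_closure_def
      using holo_germ_zero holo_germ_dbl[OF holo_germ_zero] by blast
  next
    fix g h assume g: "g \<in> lip_sat X M x" and h: "h \<in> lip_sat X M x"
    have hg: "holo_germ x (\<lambda>z. g z + h z)" using g h unfolding lip_sat_def by (auto intro: holo_germ_add)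
    have e: "dbl (\<lambda>z. g z + h z) = (\<lambda>w. dbl g w + dbl h w)"
      by (simp add: fun_eq_iff vec_eq_iff dbl_def split: sum.split)
    have "(dbl (\<lambda>z. g z + h z) \<circ> \<phi>) \<in> pullback_module \<phi> (double_stalk X M x)"
      if "curve_germ (XxX X) (dpt x x) \<phi>" for \<phi>
      using g h that unfolding lip_sat_def int_closure_def e by (auto simp: o_def intro: pb_add)
    thus "(\<lambda>z. g z + h z) \<in> lip_sat X M x" unfolding lip_sat_def int_closure_def
      using hg holo_germ_dbl[OF hg] by blast
  next
    fix a h assume a: "sholo_germ x a" and h: "h \<in> lip_sat X M x"
    have hg: "holo_germ x (\<lambda>z. a z *s h z)" using a h unfolding lip_sat_def by (auto intro: holo_germ_smult)
    have "(dbl (\<lambda>z. a z *s h z) \<circ> \<phi>) \<in> pullback_module \<phi> (double_stalk X M x)"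
      if c: "curve_germ (XxX X) (dpt x x) \<phi>" for \<phi>
    proof -
      have "(dbl h \<circ> \<phi>) \<in> pullback_module \<phi> (double_stalk X M x)"
        using h c unfolding lip_sat_def int_closure_def by blast
      hence "(dbl h \<circ> \<phi>) \<in> pullback_module \<phi> {dbl h | h. h \<in> M x}" using pb_double[of _ _ X M x] c by blast
      then obtain e and k::nat and m b where r: "e > 0" "\<forall>i<k. m i \<in> M x \<and> b i holomorphic_on ball 0 e"
        "\<forall>t\<in>ball 0 e. (dbl h \<circ> \<phi>) t = (\<Sum>i<k. b i t *s dbl (m i) (\<phi> t))"
        using pb_dbl_rep[of _ _ M x] by blast
      have am: "\<forall>i<k. dbl (\<lambda>z. a z *s m i z) \<in> double_stalk X M x \<and> b i holomorphic_on ball 0 e"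
        using r(2) GS a dbl_in_ds[of X x M, OF GS] unfolding germ_submodule_def by blast
      have "\<forall>t\<in>ball 0 e. (dbl (\<lambda>z. a z *s h z) \<circ> \<phi>) t = (\<Sum>i<k. b i t *s dbl (\<lambda>z. a z *s m i z) (\<phi> t))"
      proof
        fix t :: complex assume t: "t \<in> ball 0 e"
        have E: "\<forall>q. (dbl h \<circ> \<phi>) t $ q = (\<Sum>i<k. b i t *s dbl (m i) (\<phi> t)) $ q"
          using r(3) t by simp
        show "(dbl (\<lambda>z. a z *s h z) \<circ> \<phi>) t = (\<Sum>i<k. b i t *s dbl (\<lambda>z. a z *s m i z) (\<phi> t))"
        proof (subst vec_eq_iff, rule allI)
          fix q show "(dbl (\<lambda>z. a z *s h z) \<circ> \<phi>) t $ q = (\<Sum>i<k. b i t *s dbl (\<lambda>z. a z *s m i z) (\<phi> t)) $ q"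
          proof (cases q)
            case (Inl j) thus ?thesis using E[rule_format, of q] by (simp add: sum_distrib_left ac_simps)
          next
            case (Inr j) thus ?thesis using E[rule_format, of q] by (simp add: sum_distrib_left ac_simps)
          qed
        qed
      qed
      thus ?thesis unfolding pullback_module_def using r(1) am
        by (intro CollectI exI[of _ e] conjI exI[of _ k] exI[of _ "\<lambda>i. dbl (\<lambda>z. a z *s m i z)"] exI[of _ b]) auto
    qed
    thus "(\<lambda>z. a z *s h z) \<in> lip_sat X M x" unfolding lip_sat_def int_closure_def
      using hg holo_germ_dbl[OF hg] by blast
  next
    fix h g assume h: "h \<in> lip_sat X M x" and gg: "holo_germ x g" and sg: "same_germ X x g h"
    obtain V where V: "open V" "x \<in> V" "\<forall>z\<in>X \<inter> V. g z = h z" using sg unfolding same_germ_def by blast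
    have "(dbl g \<circ> \<phi>) \<in> pullback_module \<phi> (double_stalk X M x)"
      if c: "curve_germ (XxX X) (dpt x x) \<phi>" for \<phi>
    proof -
      have hp: "(dbl h \<circ> \<phi>) \<in> pullback_module \<phi> (double_stalk X M x)"
        using h c unfolding lip_sat_def int_closure_def by blast
      obtain d where d: "d > 0" "\<forall>t\<in>ball 0 d. \<phi> t \<in> XxX X \<and> \<phi> t \<in> pr1 -` V \<inter> pr2 -` V"
        using curve_near[OF c open_pr_vimage[OF V(1)]] V(2) by auto
      have eq: "\<forall>t\<in>ball 0 d. (dbl g \<circ> \<phi>) t = (dbl h \<circ> \<phi>) t"
      proof
        fix t :: complex assume "t \<in> ball 0 d"
        hence "pr1 (\<phi> t) \<in> X \<inter> V" "pr2 (\<phi> t) \<in> X \<inter> V" using d(2) unfolding XxX_def by auto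
        hence e1: "g (pr1 (\<phi> t)) = h (pr1 (\<phi> t))" and e2: "g (pr2 (\<phi> t)) = h (pr2 (\<phi> t))" using V(3) by auto
        show "(dbl g \<circ> \<phi>) t = (dbl h \<circ> \<phi>) t" unfolding o_def dbl_def e1 e2 by (rule refl)
      qed
      show ?thesis by (rule pb_cong[OF hp d(1) eq])
    qed
    thus "g \<in> lip_sat X M x" unfolding lip_sat_def int_closure_def
      using gg holo_germ_dbl[OF gg] by blast
  qed
  show "germ_submodule X x (lip_sat X M x) \<and> M x \<subseteq> lip_sat X M x \<and> lip_sat X M x \<subseteq> int_closure X x (M x)"
    using GL sub1 sub2 by blast
qed

end
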